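(* Under the standing assumptions below, suppose $S_1\neq\emptyset$. Then there exists a rank-one idempotent $P\in M_2(\mathbb C)$ such that $\theta(S_1)\subseteq\overline{B}_P(12\delta)\sqcup\overline{B}_{I-P}(12\delta)$ (a disjoint union). Moreover, for $e,f\in S_1$: if $\theta(e),\theta(f)\in\overline B_P(12\delta)$ then $\theta(ef)\in\overline B_P(12\delta)$; if $\theta(e),\theta(f)\in\overline B_{I-P}(12\delta)$ then $\theta(ef)\in\overline B_{I-P}(12\delta)$; if $\theta(e)\in\overline B_P(12\delta)$ and $\theta(f)\in\overline B_{I-P}(12\delta)$ then $ef\in S_0$.
   Context: Standing assumptions: $S$ is a semilattice (commutative semigroup of idempotents), $0\le\delta<0.03$, and $\theta:S\to M_2(\mathbb C)$ satisfies $\|\theta(e)\theta(f)-\theta(ef)\|_{HS}\le\delta$ for all $e,f\in S$, where $\|A\|_{HS}=(\operatorname{tr}(A^*A))^{1/2}$. For $k\in\{0,1,2\}$, $S_k=\{x\in S:\ |\operatorname{tr}\theta(x)-k|<0.95\}$; these sets are pairwise disjoint and cover $S$. $\overline B_A(r)=\{B\in M_2(\mathbb C):\|A-B\|_{HS}\le r\}$. *)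

theory Defs
  imports "HOL-Analysis.Analysis"
begin

type_synonym cmat2 = "complex^2^2"

definition hs_norm :: "cmat2 \<Rightarrow> real" where
  "hs_norm A = sqrt (\<Sum>i\<in>UNIV. \<Sum>j\<in>UNIV. (cmod (A $ i $ j))^2)"

definition hs_cball :: "cmat2 \<Rightarrow> real \<Rightarrow> cmat2 set" where
  "hs_cball A r = {B. hs_norm (A - B) \<le> r}"

definition crank :: "cmat2 \<Rightarrow> nat" where
  "crank A = vec.dim (range (\<lambda>x. A *v x))"

definition Sk :: "('a \<Rightarrow> cmat2) \<Rightarrow> nat \<Rightarrow> 'a set" where
  "Sk \<theta> k = {x. cmod (trace (\<theta> x) - of_nat k) < 0.95}"

end

theory Submission
  imports Defs
begin

lemma hs_norm_eq: "hs_norm A = norm A"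
  unfolding hs_norm_def norm_vec_def L2_set_def
  by (simp add: sum_nonneg)

lemma hs_sq: "(hs_norm A)^2 = (cmod (A$1$1))^2 + (cmod (A$1$2))^2 + (cmod (A$2$1))^2 + (cmod (A$2$2))^2"
  unfolding hs_norm_def by (simp add: sum_2 sum_nonneg)

lemma mult_ent: "((A::cmat2) ** B)$i$j = A$i$1 * B$1$j + A$i$2 * B$2$j"
  by (simp add: matrix_matrix_mult_def sum_2)

lemma trace_ent: "trace (A::complex^2^2) = A$1$1 + A$2$2"
  by (simp add: trace_def sum_2)

lemma mat1_ent: "(mat 1 :: complex^2^2)$i$j = (if i = j then 1 else 0)"
  by (simp add: mat_def)

lemma parallelogram_c: "(cmod (u+v))^2 + (cmod (u-v))^2 = 2*(cmod u)^2 + 2*(cmod (v::complex))^2"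
  unfolding cmod_power2 by (simp add: power2_eq_square algebra_simps)

definition al :: "cmat2 \<Rightarrow> complex" where "al X = (X$1$1 - X$2$2)/2"
definition nu :: "cmat2 \<Rightarrow> complex" where "nu X = (al X)^2 + X$1$2 * X$2$1"
definition n2 :: "cmat2 \<Rightarrow> real" where
  "n2 X = 2*(cmod (al X))^2 + (cmod (X$1$2))^2 + (cmod (X$2$1))^2"

lemma I1: "(hs_norm X)^2 = (cmod (trace X))^2/2 + n2 X"
proof -
  have "(cmod (X$1$1 + X$2$2))^2 + (cmod (X$1$1 - X$2$2))^2 = 2*(cmod (X$1$1))^2 + 2*(cmod (X$2$2))^2"
    by (rule parallelogram_c)
  moreover have "(cmod (al X))^2 = (cmod (X$1$1 - X$2$2))^2/4"
    by (simp add: al_def norm_divide power_divide)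
  ultimately show ?thesis unfolding hs_sq n2_def trace_ent by simp
qed

lemma n2_nonneg: "0 \<le> n2 X" unfolding n2_def by simp

lemma I4: "2 * cmod (nu X) \<le> n2 X"
proof -
  have "cmod (nu X) \<le> (cmod (al X))^2 + cmod (X$1$2) * cmod (X$2$1)"
    unfolding nu_def by (metis norm_mult norm_power norm_triangle_ineq)
  moreover have "2 * (cmod (X$1$2) * cmod (X$2$1)) \<le> (cmod (X$1$2))^2 + (cmod (X$2$1))^2"
    using sum_squares_bound[of "cmod (X$1$2)" "cmod (X$2$1)"] by simp
  ultimately show ?thesis unfolding n2_def by linarith
qed

lemma sub_ent: "((A::cmat2) - B)$i$j = A$i$j - B$i$j" by simp
lemma sq_ent:
  "((X::cmat2)**X - X)$1$1 = X$1$1*X$1$1 + X$1$2*X$2$1 - X$1$1"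
  "(X**X - X)$1$2 = X$1$1*X$1$2 + X$1$2*X$2$2 - X$1$2"
  "(X**X - X)$2$1 = X$2$1*X$1$1 + X$2$2*X$2$1 - X$2$1"
  "(X**X - X)$2$2 = X$2$1*X$1$2 + X$2$2*X$2$2 - X$2$2"
  by (simp_all add: mult_ent)

lemma I2: "(hs_norm (X**X - X))^2 = 2*(cmod ((trace X)^2/4 - trace X/2 + nu X))^2
     + (cmod (trace X - 1))^2 * n2 X"
proof -
  let ?Y = "X**X - X" and ?t = "trace X"
  have t: "trace ?Y = 2*(?t^2/4 - ?t/2 + nu X)"
    unfolding trace_ent sq_ent nu_def al_def by (simp add: power2_eq_square field_simps)
  have a: "al ?Y = (?t - 1) * al X" unfolding trace_ent sq_ent al_def by (simp add: field_simps)
  have b: "?Y$1$2 = (?t - 1) * X$1$2" unfolding trace_ent sq_ent by (simp add: algebra_simps)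
  have c: "?Y$2$1 = (?t - 1) * X$2$1" unfolding trace_ent sq_ent by (simp add: algebra_simps)
  have "n2 ?Y = (cmod (?t - 1))^2 * n2 X"
    unfolding n2_def a b c norm_mult power_mult_distrib by (simp add: algebra_simps)
  moreover have "(cmod (2*z))^2 / 2 = 2 * (cmod z)^2" for z :: complex
    by (simp add: norm_mult power_mult_distrib)
  ultimately show ?thesis unfolding I1 t by (simp only:)
qed

lemma I3: "(hs_norm (mat 1 - X - X))^2 = 2*(cmod (1 - trace X))^2 + 4 * n2 X"
proof -
  let ?Y = "mat 1 - X - X" and ?t = "trace X"
  have t: "trace ?Y = 2*(1 - ?t)" by (simp add: trace_ent mat1_ent)
  have a: "al ?Y = -2 * al X" by (simp add: mat1_ent al_def field_simps)
  have b: "?Y$1$2 = -2 * X$1$2" by (simp add: mat1_ent)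
  have c: "?Y$2$1 = -2 * X$2$1" by (simp add: mat1_ent)
  have "n2 ?Y = 4 * n2 X"
    unfolding n2_def a b c norm_mult power_mult_distrib by simp
  moreover have "(cmod (2*z))^2 / 2 = 2 * (cmod z)^2" for z :: complex
    by (simp add: norm_mult power_mult_distrib)
  ultimately show ?thesis unfolding I1 t by (simp only:)
qed

lemma csq_norm: "(cmod (csqrt z))^2 = cmod z"
  by simp

lemma spec2x2:
  obtains \<mu>1 \<mu>2 s where "s \<ge> 0" "trace X = \<mu>1 + \<mu>2" "nu X = ((\<mu>1 - \<mu>2)/2)^2"
    "(hs_norm X)^2 = (cmod \<mu>1)^2 + (cmod \<mu>2)^2 + s"
    "(hs_norm (X**X - X))^2 = (cmod (\<mu>1^2 - \<mu>1))^2 + (cmod (\<mu>2^2 - \<mu>2))^2 + (cmod (\<mu>1 + \<mu>2 - 1))^2 * s"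
    "(hs_norm (mat 1 - X - X))^2 = (cmod (1 - 2*\<mu>1))^2 + (cmod (1 - 2*\<mu>2))^2 + 4 * s"
    "n2 X = s + 2 * cmod (nu X)"
proof -
  define t where "t = trace X"
  define w where "w = csqrt (nu X)"
  define c0 where "c0 = t^2/4 - t/2 + nu X"
  have ww: "w^2 = nu X" unfolding w_def by simp
  have nw: "(cmod w)^2 = cmod (nu X)" unfolding w_def by simp
  define s where "s = n2 X - 2 * cmod (nu X)"
  have s0: "s \<ge> 0" unfolding s_def using I4[of X] by simp
  have e1: "trace X = (t/2 + w) + (t/2 - w)" unfolding t_def by simp
  have e2: "nu X = (((t/2 + w) - (t/2 - w))/2)^2" using ww by simp
  have p1: "(cmod (t/2 + w))^2 + (cmod (t/2 - w))^2 = 2*(cmod (t/2))^2 + 2*(cmod w)^2"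
    by (rule parallelogram_c)
  have ct: "(cmod (t/2))^2 = (cmod t)^2/4" by (simp add: norm_divide power_divide)
  have e3: "(hs_norm X)^2 = (cmod (t/2 + w))^2 + (cmod (t/2 - w))^2 + s"
  proof -
    have "(hs_norm X)^2 = (cmod t)^2/2 + n2 X" unfolding t_def by (rule I1)
    then show ?thesis using p1 ct nw unfolding s_def by linarith
  qed
  have m1: "(t/2 + w)^2 - (t/2 + w) = c0 + (t - 1)*w"
    unfolding c0_def using ww by (simp add: power2_eq_square field_simps)
  have m2: "(t/2 - w)^2 - (t/2 - w) = c0 - (t - 1)*w"
    unfolding c0_def using ww by (simp add: power2_eq_square field_simps)
  have p2: "(cmod (c0 + (t-1)*w))^2 + (cmod (c0 - (t-1)*w))^2 = 2*(cmod c0)^2 + 2*(cmod ((t-1)*w))^2"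
    by (rule parallelogram_c)
  have p2': "(cmod ((t-1)*w))^2 = (cmod (t-1))^2 * cmod (nu X)"
    unfolding norm_mult power_mult_distrib nw by simp
  have e4: "(hs_norm (X**X - X))^2 = (cmod ((t/2 + w)^2 - (t/2 + w)))^2 + (cmod ((t/2 - w)^2 - (t/2 - w)))^2
      + (cmod ((t/2 + w) + (t/2 - w) - 1))^2 * s"
    unfolding I2 m1 m2 p2 p2' s_def by (simp add: c0_def t_def algebra_simps)
  have m3: "1 - 2*(t/2 + w) = (1 - t) - 2*w" by simp
  have m4: "1 - 2*(t/2 - w) = (1 - t) + 2*w" by simp
  have p3: "(cmod ((1-t) - 2*w))^2 + (cmod ((1-t) + 2*w))^2 = 2*(cmod (1-t))^2 + 2*(cmod (2*w))^2"
    using parallelogram_c[of "1-t" "2*w"] by simp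
  have p3': "(cmod (2*w))^2 = 4 * cmod (nu X)"
    unfolding norm_mult power_mult_distrib nw by simp
  have e5: "(hs_norm (mat 1 - X - X))^2 = (cmod (1 - 2*(t/2 + w)))^2 + (cmod (1 - 2*(t/2 - w)))^2 + 4 * s"
    unfolding I3 m3 m4 p3 p3' s_def by (simp add: t_def algebra_simps)
  have e6: "n2 X = s + 2 * cmod (nu X)" unfolding s_def by simp
  show ?thesis using that[OF s0 e1 e2 e3 e4 e5 e6] .
qed

lemma crank_one:
  fixes M :: cmat2 and v w :: "complex^2"
  assumes M: "\<And>i j. M$i$j = v$i * w$j" and v0: "v \<noteq> 0" and wv: "w$1 * v$1 + w$2 * v$2 = 1"
  shows "crank M = 1"
proof -
  have mv: "M *v x = (w$1*x$1 + w$2*x$2) *s v" for x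
    by (simp add: vec_eq_iff matrix_vector_mult_def sum_2 M algebra_simps)
  have "range (\<lambda>x. M *v x) = vec.span {v}"
  proof
    show "range (\<lambda>x. M *v x) \<subseteq> vec.span {v}"
    proof
      fix y assume "y \<in> range (\<lambda>x. M *v x)"
      then obtain x where "y = M *v x" by auto
      then have "y = (w$1*x$1 + w$2*x$2) *s v" using mv by simp
      then show "y \<in> vec.span {v}" by (simp only:) (rule vec.span_scale, rule vec.span_base, simp)
    qed
    show "vec.span {v} \<subseteq> range (\<lambda>x. M *v x)"
    proof
      fix y assume "y \<in> vec.span {v}"
      then obtain k where y: "y = k *s v" by (auto simp: vec.span_singleton)
      have "M *v y = y" unfolding y mv
        using wv by (simp add: vec_eq_iff algebra_simps) (metis distrib_left mult.assoc mult.commute mult.right_neutral)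
      then show "y \<in> range (\<lambda>x. M *v x)" by (metis rangeI)
    qed
  qed
  moreover have "vec.independent {v}"
    using v0 by (simp add: vec.independent_insert)
  ultimately show ?thesis
    unfolding crank_def by (simp add: vec.dim_span_eq_card_independent)
qed

lemma crank_of_trace1:
  fixes M :: cmat2
  assumes tr: "M$1$1 + M$2$2 = 1" and dt: "M$1$1 * M$2$2 = M$1$2 * M$2$1"
  shows "crank M = 1"
proof (cases "M$1$1 = 0")
  case False
  define v :: "complex^2" where "v = vector [M$1$1, M$2$1]"
  define w :: "complex^2" where "w = vector [1, M$1$2 / M$1$1]"
  have r: "M$2$2 = M$1$2 * M$2$1 / M$1$1" using dt False by (simp add: field_simps)
  show ?thesis
  proof (rule crank_one[of M v w])
    show "M$i$j = v$i * w$j" for i j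
      using exhaust_2[of i] exhaust_2[of j] False r by (auto simp: v_def w_def)
    show "v \<noteq> 0"
    proof
      assume "v = 0" then have "v$1 = 0" by simp
      with False show False by (simp add: v_def)
    qed
    show "w$1 * v$1 + w$2 * v$2 = 1" using tr r False by (simp add: v_def w_def field_simps)
  qed
next
  case True
  then have r: "M$2$2 = 1" and bc: "M$1$2 * M$2$1 = 0" using tr dt by auto
  define v :: "complex^2" where "v = vector [M$1$2, 1]"
  define w :: "complex^2" where "w = vector [M$2$1, 1]"
  show ?thesis
  proof (rule crank_one[of M v w])
    show "M$i$j = v$i * w$j" for i j
      using exhaust_2[of i] exhaust_2[of j] True r bc by (auto simp: v_def w_def)
    show "v \<noteq> 0"
    proof
      assume "v = 0" then have "v$2 = 0" by simp
      then show False by (simp add: v_def)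
    qed
    show "w$1 * v$1 + w$2 * v$2 = 1" using bc by (simp add: v_def w_def algebra_simps)
  qed
qed

lemma mul_bound:
  fixes x y e r m :: real
  assumes "x * y \<le> e" "0 \<le> x" "m \<le> y" "e \<le> r * m" "0 < m"
  shows "x \<le> r"
proof -
  have "x * m \<le> x * y" by (rule mult_left_mono[OF assms(3) assms(2)])
  then have "x * m \<le> r * m" using assms(1,4) by linarith
  then show ?thesis using assms(5) by simp
qed

lemma one_minus_le: "1 - cmod \<mu> \<le> cmod (\<mu> - 1)"
  using norm_triangle_ineq2[of 1 \<mu>] by (simp add: norm_minus_commute)

lemma one_minus_le': "1 - cmod (\<mu> - 1) \<le> cmod \<mu>"
  using norm_triangle_ineq[of \<mu> "1 - \<mu>"] by (simp add: norm_minus_commute)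

lemma cmod_sq_mult: "cmod (\<mu>^2 - \<mu>) = cmod \<mu> * cmod (\<mu> - 1)"
proof -
  have "\<mu>^2 - \<mu> = \<mu> * (\<mu> - 1)" by (simp add: power2_eq_square algebra_simps)
  then show ?thesis by (simp add: norm_mult)
qed

lemma loc01:
  assumes "cmod \<mu> * cmod (\<mu> - 1) \<le> e" "e < 1/4"
  shows "cmod \<mu> \<le> 1/2 \<or> cmod (\<mu> - 1) \<le> 1/2"
proof (rule ccontr)
  assume "\<not> ?thesis"
  then have a: "1/2 < cmod \<mu>" "1/2 < cmod (\<mu> - 1)" by auto
  have "(1/2::real) * (1/2) < cmod \<mu> * cmod (\<mu> - 1)"
    by (rule mult_strict_mono) (use a in auto)
  then show False using assms by simp
qed

lemma near0:
  assumes h: "cmod \<mu> * cmod (\<mu> - 1) \<le> e" and h2: "cmod \<mu> \<le> 1/2"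
    and c: "2*e \<le> r1" "r1 < 1" "e \<le> r2*(1-r1)" "r2 < 1" "e \<le> r3*(1-r2)"
  shows "cmod \<mu> \<le> r3"
proof -
  have d: "1 - cmod \<mu> \<le> cmod (\<mu> - 1)" by (rule one_minus_le)
  have s1: "cmod \<mu> \<le> 2*e"
    by (rule mul_bound[OF h norm_ge_zero, of "1/2"]) (use d h2 in auto)
  have s2: "cmod \<mu> \<le> r2"
    by (rule mul_bound[OF h norm_ge_zero, of "1 - r1"]) (use d s1 c in auto)
  show "cmod \<mu> \<le> r3"
    by (rule mul_bound[OF h norm_ge_zero, of "1 - r2"]) (use d s2 c in auto)
qed

lemma near01:
  assumes h: "cmod \<mu> * cmod (\<mu> - 1) \<le> e" and e: "e < 1/4"
    and c: "2*e \<le> r1" "r1 < 1" "e \<le> r2*(1-r1)" "r2 < 1" "e \<le> r3*(1-r2)"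
  shows "cmod \<mu> \<le> r3 \<or> cmod (\<mu> - 1) \<le> r3"
proof -
  have "cmod \<mu> \<le> 1/2 \<or> cmod (\<mu> - 1) \<le> 1/2" using loc01[OF h e] .
  then show ?thesis
  proof
    assume "cmod \<mu> \<le> 1/2" then show ?thesis using near0[OF h _ c] by simp
  next
    assume a: "cmod (\<mu> - 1) \<le> 1/2"
    have h': "cmod (1 - \<mu>) * cmod ((1 - \<mu>) - 1) \<le> e"
      using h by (simp add: norm_minus_commute mult.commute)
    have "cmod (1 - \<mu>) \<le> r3" using near0[OF h' _ c] a by (simp add: norm_minus_commute)
    then show ?thesis by (simp add: norm_minus_commute)
  qed
qed

lemma eig_bound:
  assumes "hs_norm (X**X - X) \<le> \<epsilon>"
    and "(hs_norm (X**X - X))^2 = (cmod (\<mu>1^2 - \<mu>1))^2 + (cmod (\<mu>2^2 - \<mu>2))^2 + (cmod (\<mu>1 + \<mu>2 - 1))^2 * s"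
    and "s \<ge> 0"
  shows "cmod \<mu>1 * cmod (\<mu>1 - 1) \<le> \<epsilon>" "cmod \<mu>2 * cmod (\<mu>2 - 1) \<le> \<epsilon>"
    "(cmod (\<mu>1^2 - \<mu>1))^2 + (cmod (\<mu>2^2 - \<mu>2))^2 + (cmod (\<mu>1 + \<mu>2 - 1))^2 * s \<le> \<epsilon>^2"
proof -
  have hn: "0 \<le> hs_norm (X**X - X)" by (simp add: hs_norm_eq)
  then have e0: "0 \<le> \<epsilon>" using assms(1) by linarith
  have sq: "(hs_norm (X**X - X))^2 \<le> \<epsilon>^2" using assms(1) hn by (simp add: power_mono)
  then show "(cmod (\<mu>1^2 - \<mu>1))^2 + (cmod (\<mu>2^2 - \<mu>2))^2 + (cmod (\<mu>1 + \<mu>2 - 1))^2 * s \<le> \<epsilon>^2"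
    using assms(2) by simp
  have p: "0 \<le> (cmod (\<mu>1 + \<mu>2 - 1))^2 * s" using assms(3) by simp
  have z1: "0 \<le> (cmod (\<mu>1^2 - \<mu>1))^2" "0 \<le> (cmod (\<mu>2^2 - \<mu>2))^2" by simp_all
  have "(cmod (\<mu>1^2 - \<mu>1))^2 \<le> \<epsilon>^2" using sq assms(2) p z1 by linarith
  then have "cmod (\<mu>1^2 - \<mu>1) \<le> \<epsilon>" using e0 by (rule power2_le_imp_le)
  then show "cmod \<mu>1 * cmod (\<mu>1 - 1) \<le> \<epsilon>" by (simp add: cmod_sq_mult)
  have "(cmod (\<mu>2^2 - \<mu>2))^2 \<le> \<epsilon>^2" using sq assms(2) p z1 by linarith
  then have "cmod (\<mu>2^2 - \<mu>2) \<le> \<epsilon>" using e0 by (rule power2_le_imp_le)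
  then show "cmod \<mu>2 * cmod (\<mu>2 - 1) \<le> \<epsilon>" by (simp add: cmod_sq_mult)
qed

lemma sq_m_le:
  assumes "0 \<le> m" "m \<le> cmod (\<mu> - 1)"
  shows "(cmod \<mu>)^2 * m^2 \<le> (cmod (\<mu>^2 - \<mu>))^2"
proof -
  have "m^2 \<le> (cmod (\<mu> - 1))^2" using assms by (simp add: power_mono)
  then have "(cmod \<mu>)^2 * m^2 \<le> (cmod \<mu>)^2 * (cmod (\<mu> - 1))^2" by (simp add: mult_left_mono)
  then show ?thesis by (simp add: cmod_sq_mult power_mult_distrib)
qed

lemma zero_lem:
  assumes h: "hs_norm (X**X - X) \<le> \<epsilon>" and he: "\<epsilon> \<le> e" and e: "e < 1/4"
    and c: "2*e \<le> r1" "r1 < 1" "e \<le> r2*(1-r1)" "r2 < 1" "e \<le> r3*(1-r2)"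
    and tr: "cmod (trace X) \<le> T" and T: "T < 1 - 2*r3"
    and m: "0 < m" "m \<le> 1 - r3" "m \<le> 1 - T"
  shows "hs_norm X \<le> \<epsilon> / m"
proof -
  obtain \<mu>1 \<mu>2 s where s0: "s \<ge> 0" and t: "trace X = \<mu>1 + \<mu>2"
    and n1: "(hs_norm X)^2 = (cmod \<mu>1)^2 + (cmod \<mu>2)^2 + s"
    and n2: "(hs_norm (X**X - X))^2 = (cmod (\<mu>1^2 - \<mu>1))^2 + (cmod (\<mu>2^2 - \<mu>2))^2 + (cmod (\<mu>1 + \<mu>2 - 1))^2 * s"
    by (rule spec2x2)
  note eb = eig_bound[OF h n2 s0]
  have a1: "cmod \<mu>1 * cmod (\<mu>1 - 1) \<le> e" using eb(1) he by linarith
  have a2: "cmod \<mu>2 * cmod (\<mu>2 - 1) \<le> e" using eb(2) he by linarith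
  have l1: "cmod \<mu>1 \<le> r3 \<or> cmod (\<mu>1 - 1) \<le> r3" by (rule near01[OF a1 e c])
  have l2: "cmod \<mu>2 \<le> r3 \<or> cmod (\<mu>2 - 1) \<le> r3" by (rule near01[OF a2 e c])
  have tT: "cmod (\<mu>1 + \<mu>2) \<le> T" using tr t by simp
  have tri1: "cmod (\<mu>1 + \<mu>2) \<ge> cmod u - cmod v" if "\<mu>1 + \<mu>2 = u + v" for u v
    using norm_triangle_ineq4[of "u + v" "v"] that by simp
  have two: "cmod (2::complex) \<le> cmod (\<mu>1 + \<mu>2) + cmod (\<mu>1 - 1) + cmod (\<mu>2 - 1)"
  proof -
    have "(2::complex) = (\<mu>1 + \<mu>2) - (\<mu>1 - 1) - (\<mu>2 - 1)" by simp
    then have "cmod (2::complex) = cmod ((\<mu>1 + \<mu>2) - (\<mu>1 - 1) - (\<mu>2 - 1))" by simp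
    also have "\<dots> \<le> cmod ((\<mu>1 + \<mu>2) - (\<mu>1 - 1)) + cmod (\<mu>2 - 1)" by (rule norm_triangle_ineq4)
    also have "\<dots> \<le> cmod (\<mu>1 + \<mu>2) + cmod (\<mu>1 - 1) + cmod (\<mu>2 - 1)"
      using norm_triangle_ineq4[of "\<mu>1 + \<mu>2" "\<mu>1 - 1"] by linarith
    finally show ?thesis .
  qed
  have b1: "cmod \<mu>1 \<le> r3"
  proof (rule ccontr)
    assume "\<not> ?thesis"
    then have f1: "cmod (\<mu>1 - 1) \<le> r3" using l1 by auto
    have g1: "cmod \<mu>1 \<ge> 1 - r3" using one_minus_le'[of \<mu>1] f1 by linarith
    from l2 show False
    proof
      assume "cmod \<mu>2 \<le> r3"
      then show False using tri1[of \<mu>1 \<mu>2] g1 tT T by auto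
    next
      assume "cmod (\<mu>2 - 1) \<le> r3"
      then show False using two f1 tT T by simp
    qed
  qed
  have b2: "cmod \<mu>2 \<le> r3"
  proof (rule ccontr)
    assume "\<not> ?thesis"
    then have f1: "cmod (\<mu>2 - 1) \<le> r3" using l2 by auto
    have g1: "cmod \<mu>2 \<ge> 1 - r3" using one_minus_le'[of \<mu>2] f1 by linarith
    have "cmod (\<mu>1 + \<mu>2) \<ge> cmod \<mu>2 - cmod \<mu>1" using tri1[of \<mu>2 \<mu>1] by (simp add: add.commute)
    then show False using b1 g1 tT T by auto
  qed
  have m1: "m \<le> cmod (\<mu>1 - 1)" using one_minus_le[of \<mu>1] b1 m by linarith
  have m2: "m \<le> cmod (\<mu>2 - 1)" using one_minus_le[of \<mu>2] b2 m by linarith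
  have m3: "m \<le> cmod (\<mu>1 + \<mu>2 - 1)" using one_minus_le[of "\<mu>1 + \<mu>2"] tT m by linarith
  have q1: "(cmod \<mu>1)^2 * m^2 \<le> (cmod (\<mu>1^2 - \<mu>1))^2" using sq_m_le m(1) m1 by simp
  have q2: "(cmod \<mu>2)^2 * m^2 \<le> (cmod (\<mu>2^2 - \<mu>2))^2" using sq_m_le m(1) m2 by simp
  have q3: "s * m^2 \<le> (cmod (\<mu>1 + \<mu>2 - 1))^2 * s"
    using s0 m(1) m3 by (simp add: mult.commute mult_left_mono power_mono)
  have "(hs_norm X * m)^2 = (hs_norm X)^2 * m^2" by (simp add: power_mult_distrib)
  also have "\<dots> = (cmod \<mu>1)^2 * m^2 + (cmod \<mu>2)^2 * m^2 + s * m^2" unfolding n1 by (simp add: algebra_simps)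
  also have "\<dots> \<le> \<epsilon>^2" using q1 q2 q3 eb(3) by linarith
  finally have "(hs_norm X * m)^2 \<le> \<epsilon>^2" .
  then have "hs_norm X * m \<le> \<epsilon>"
    using power2_le_imp_le eb(1) by (metis abs_le_square_iff abs_of_nonneg mult_nonneg_nonneg norm_ge_zero order_trans)
  then show ?thesis using m(1) by (simp add: pos_le_divide_eq)
qed

lemma trace_lem:
  assumes h: "hs_norm (X**X - X) \<le> \<epsilon>" and he: "\<epsilon> \<le> e" and e: "e < 1/4"
    and c: "2*e \<le> r1" "r1 < 1" "e \<le> r2*(1-r1)" "r2 < 1" "e \<le> r3*(1-r2)"
  shows "\<exists>j\<in>{0,1,2::nat}. cmod (trace X - of_nat j) \<le> 2*r3"
proof -
  obtain \<mu>1 \<mu>2 s where s0: "s \<ge> 0" and t: "trace X = \<mu>1 + \<mu>2"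
    and n2: "(hs_norm (X**X - X))^2 = (cmod (\<mu>1^2 - \<mu>1))^2 + (cmod (\<mu>2^2 - \<mu>2))^2 + (cmod (\<mu>1 + \<mu>2 - 1))^2 * s"
    by (rule spec2x2)
  note eb = eig_bound[OF h n2 s0]
  have a1: "cmod \<mu>1 * cmod (\<mu>1 - 1) \<le> e" using eb(1) he by linarith
  have a2: "cmod \<mu>2 * cmod (\<mu>2 - 1) \<le> e" using eb(2) he by linarith
  have l1: "\<exists>j1\<in>{0,1::nat}. cmod (\<mu>1 - of_nat j1) \<le> r3" using near01[OF a1 e c] by auto
  have l2: "\<exists>j2\<in>{0,1::nat}. cmod (\<mu>2 - of_nat j2) \<le> r3" using near01[OF a2 e c] by auto
  from l1 l2 obtain j1 j2 where j: "j1 \<in> {0,1::nat}" "j2 \<in> {0,1::nat}"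
    and d: "cmod (\<mu>1 - of_nat j1) \<le> r3" "cmod (\<mu>2 - of_nat j2) \<le> r3" by blast
  have "cmod (trace X - of_nat (j1 + j2)) = cmod ((\<mu>1 - of_nat j1) + (\<mu>2 - of_nat j2))"
    unfolding t by (simp add: algebra_simps)
  also have "\<dots> \<le> 2 * r3" using norm_triangle_ineq[of "\<mu>1 - of_nat j1" "\<mu>2 - of_nat j2"] d by linarith
  finally show ?thesis using j by (intro bexI[of _ "j1 + j2"]) auto
qed

lemma anchor:
  assumes a: "cmod \<mu> * cmod (\<mu> - 1) \<le> \<delta>" and d: "0 \<le> \<delta>" "\<delta> \<le> (3/100)"
  shows "\<exists>j::nat. j \<in> {0,1} \<and> cmod (\<mu> - of_nat j) \<le> (32/1000) \<and> (968/1000) * cmod (\<mu> - of_nat j) \<le> cmod (\<mu>^2 - \<mu>)"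
proof -
  have a': "cmod \<mu> * cmod (\<mu> - 1) \<le> (3/100)" using a d by linarith
  have "cmod \<mu> \<le> (32/1000) \<or> cmod (\<mu> - 1) \<le> (32/1000)"
    by (rule near01[OF a', of "6/100" "32/1000" "32/1000"]) auto
  then show ?thesis
  proof
    assume h: "cmod \<mu> \<le> (32/1000)"
    have "((968/1000)::real) = 1 - (32/1000)" by simp
    then have "(968/1000) \<le> cmod (\<mu> - 1)" using one_minus_le[of \<mu>] h by linarith
    then have "(968/1000) * cmod \<mu> \<le> cmod (\<mu> - 1) * cmod \<mu>" by (rule mult_right_mono) simp
    then show ?thesis using h by (intro exI[of _ 0]) (simp add: cmod_sq_mult mult.commute)
  next
    assume h: "cmod (\<mu> - 1) \<le> (32/1000)"
    have "((968/1000)::real) = 1 - (32/1000)" by simp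
    then have "(968/1000) \<le> cmod \<mu>" using one_minus_le'[of \<mu>] h by linarith
    then have "(968/1000) * cmod (\<mu> - 1) \<le> cmod \<mu> * cmod (\<mu> - 1)" by (rule mult_right_mono) simp
    then show ?thesis using h by (intro exI[of _ 1]) (simp add: cmod_sq_mult)
  qed
qed

lemma one_minus_two: "j \<in> {0,1::nat} \<Longrightarrow> 1 - 2 * cmod (\<mu> - of_nat j) \<le> cmod (1 - 2*\<mu>)"
proof -
  assume j: "j \<in> {0,1::nat}"
  have i1: "norm (1 - 2 * of_nat j::complex) - norm (2*(\<mu> - of_nat j)) \<le> norm ((1 - 2 * of_nat j) - 2*(\<mu> - of_nat j))"
    by (rule norm_triangle_ineq2)
  have i2: "norm (2*(\<mu> - of_nat j)) = 2 * cmod (\<mu> - of_nat j)" by (simp only: norm_mult) simp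
  have i3: "norm (1 - 2 * of_nat j::complex) = 1" using j by auto
  have i4: "(1 - 2 * of_nat j) - 2*(\<mu> - of_nat j) = 1 - 2*\<mu>" by (simp add: algebra_simps)
  show ?thesis using i1 i2 i3 i4 by simp
qed

lemma lin_aux:
  fixes a b c1 c2 r D S :: real
  assumes "937024/1000000 * a \<le> c1" "937024/1000000 * b \<le> c2" "0 \<le> r" "c1 + c2 + r \<le> D"
    "S \<le> 2*(a+b)" "0 \<le> D"
  shows "S \<le> 21609/10000 * D"
  using assms by argo

lemma S_lem:
  assumes h: "hs_norm (X**X - X) \<le> \<delta>" and d: "0 \<le> \<delta>" "\<delta> \<le> (3/100)"
  shows "\<exists>k\<in>{0,1,2::nat}. cmod (trace X - of_nat k) \<le> (147/100)*\<delta>"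
    and "cmod (trace X - 1) < 0.95 \<Longrightarrow> cmod (trace X - 1) \<le> (147/100)*\<delta> \<and> cmod (4 * nu X - 1) \<le> (301/100)*\<delta>
        \<and> (13/10) \<le> hs_norm (mat 1 - X - X)"
proof -
  obtain \<mu>1 \<mu>2 s where s0: "s \<ge> 0" and t: "trace X = \<mu>1 + \<mu>2" and nu: "nu X = ((\<mu>1 - \<mu>2)/2)^2"
    and n2: "(hs_norm (X**X - X))^2 = (cmod (\<mu>1^2 - \<mu>1))^2 + (cmod (\<mu>2^2 - \<mu>2))^2 + (cmod (\<mu>1 + \<mu>2 - 1))^2 * s"
    and n3: "(hs_norm (mat 1 - X - X))^2 = (cmod (1 - 2*\<mu>1))^2 + (cmod (1 - 2*\<mu>2))^2 + 4 * s"
    by (rule spec2x2)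
  note eb = eig_bound[OF h n2 s0]
  obtain j1 where j1: "j1 \<in> {0,1}" "cmod (\<mu>1 - of_nat j1) \<le> (32/1000)"
      "(968/1000) * cmod (\<mu>1 - of_nat j1) \<le> cmod (\<mu>1^2 - \<mu>1)"
    using anchor[OF eb(1) d] by blast
  obtain j2 where j2: "j2 \<in> {0,1}" "cmod (\<mu>2 - of_nat j2) \<le> (32/1000)"
      "(968/1000) * cmod (\<mu>2 - of_nat j2) \<le> cmod (\<mu>2^2 - \<mu>2)"
    using anchor[OF eb(2) d] by blast
  define d1 where "d1 = cmod (\<mu>1 - of_nat j1)"
  define d2 where "d2 = cmod (\<mu>2 - of_nat j2)"
  have d1p: "0 \<le> d1" and d2p: "0 \<le> d2" unfolding d1_def d2_def by simp_all
  have q1: "((968/1000) * d1)^2 \<le> (cmod (\<mu>1^2 - \<mu>1))^2"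
    using j1(3) d1p unfolding d1_def by (simp add: power_mono)
  have q2: "((968/1000) * d2)^2 \<le> (cmod (\<mu>2^2 - \<mu>2))^2"
    using j2(3) d2p unfolding d2_def by (simp add: power_mono)
  have q3: "0 \<le> (cmod (\<mu>1 + \<mu>2 - 1))^2 * s" using s0 by simp
  have sq: "(d1 + d2)^2 \<le> 2 * (d1^2 + d2^2)"
    using sum_squares_bound[of d1 d2] by (simp add: power2_eq_square algebra_simps)
  have "((968/1000) * d1)^2 = (937024/1000000) * d1^2" "((968/1000) * d2)^2 = (937024/1000000) * d2^2"
    by (simp_all add: power2_eq_square algebra_simps)
  then have q1': "(937024/1000000) * d1^2 \<le> (cmod (\<mu>1^2 - \<mu>1))^2"
    and q2': "(937024/1000000) * d2^2 \<le> (cmod (\<mu>2^2 - \<mu>2))^2" using q1 q2 by linarith+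
  have dsq: "((147/100)*\<delta>)^2 = (21609/10000) * \<delta>^2" by (simp add: power2_eq_square)
  have "(d1 + d2)^2 \<le> ((147/100)*\<delta>)^2"
    unfolding dsq by (rule lin_aux[OF q1' q2' q3 eb(3) sq zero_le_power2])
  then have dd: "d1 + d2 \<le> (147/100)*\<delta>" by (rule power2_le_imp_le) (use d in simp)
  have tj: "cmod (trace X - of_nat (j1 + j2)) \<le> (147/100)*\<delta>"
  proof -
    have "cmod (trace X - of_nat (j1 + j2)) = cmod ((\<mu>1 - of_nat j1) + (\<mu>2 - of_nat j2))"
      unfolding t by (simp add: algebra_simps)
    also have "\<dots> \<le> d1 + d2" unfolding d1_def d2_def by (rule norm_triangle_ineq)
    finally show ?thesis using dd by linarith
  qed
  show "\<exists>k\<in>{0,1,2::nat}. cmod (trace X - of_nat k) \<le> (147/100)*\<delta>"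
    using tj j1(1) j2(1) by (intro bexI[of _ "j1 + j2"]) auto
  assume t1'': "cmod (trace X - 1) < 0.95"
  have t1: "cmod (trace X - 1) < 95/100" using t1'' by simp
  have jj: "j1 + j2 = 1"
  proof (rule ccontr)
    assume "j1 + j2 \<noteq> 1"
    then have "j1 + j2 = 0 \<or> j1 + j2 = 2" using j1(1) j2(1) by auto
    then have "cmod (of_nat (j1 + j2) - (1::complex)) = 1"
    proof
      assume h: "j1 + j2 = 0" show ?thesis by (subst h) simp
    next
      assume h: "j1 + j2 = 2" show ?thesis by (subst h) simp
    qed
    moreover have "cmod (of_nat (j1 + j2) - (1::complex)) \<le> cmod (trace X - of_nat (j1 + j2)) + cmod (trace X - 1)"
      using norm_triangle_ineq4[of "trace X - 1" "trace X - of_nat (j1 + j2)"]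
      by (simp add: norm_minus_commute)
    ultimately show False using tj t1 d by linarith
  qed
  have A: "cmod (trace X - 1) \<le> (147/100)*\<delta>" using tj jj by simp
  have B: "cmod (4 * nu X - 1) \<le> (301/100)*\<delta>"
  proof -
    have fac: "4 * nu X - 1 = (\<mu>1 - \<mu>2 - 1) * (\<mu>1 - \<mu>2 + 1)"
      unfolding nu by (simp add: power2_eq_square field_simps)
    have "cmod (4 * nu X - 1) \<le> (d1 + d2) * (2 + (d1 + d2))"
    proof (cases "j1 = 0")
      case True
      then have "j2 = 1" using jj by simp
      then have e1: "\<mu>1 - \<mu>2 + 1 = (\<mu>1 - of_nat j1) - (\<mu>2 - of_nat j2)" and
         e2: "\<mu>1 - \<mu>2 - 1 = (\<mu>1 - of_nat j1) - (\<mu>2 - of_nat j2) - 2" using True by simp_all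
      have n1: "cmod (\<mu>1 - \<mu>2 + 1) \<le> d1 + d2" unfolding e1 d1_def d2_def by (rule norm_triangle_ineq4)
      have n2': "cmod (\<mu>1 - \<mu>2 - 1) \<le> 2 + (d1 + d2)"
        using norm_triangle_ineq4[of "(\<mu>1 - of_nat j1) - (\<mu>2 - of_nat j2)" 2] n1 unfolding e2 e1 by simp
      show ?thesis unfolding fac norm_mult
        using mult_mono[OF n2' n1] d1p d2p by (simp add: mult.commute)
    next
      case False
      then have "j1 = 1" "j2 = 0" using jj j1(1) by auto
      then have e1: "\<mu>1 - \<mu>2 - 1 = (\<mu>1 - of_nat j1) - (\<mu>2 - of_nat j2)" and
         e2: "\<mu>1 - \<mu>2 + 1 = (\<mu>1 - of_nat j1) - (\<mu>2 - of_nat j2) + 2" by simp_all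
      have n1: "cmod (\<mu>1 - \<mu>2 - 1) \<le> d1 + d2" unfolding e1 d1_def d2_def by (rule norm_triangle_ineq4)
      have n2': "cmod (\<mu>1 - \<mu>2 + 1) \<le> 2 + (d1 + d2)"
        using norm_triangle_ineq[of "(\<mu>1 - of_nat j1) - (\<mu>2 - of_nat j2)" 2] n1 unfolding e2 e1 by simp
      show ?thesis unfolding fac norm_mult
        using mult_mono[OF n1 n2'] d1p d2p by simp
    qed
    also have "\<dots> \<le> ((147/100)*\<delta>) * (2 + (441/10000))"
      using dd d d1p d2p by (intro mult_mono) auto
    also have "\<dots> \<le> (301/100)*\<delta>" using d by simp
    finally show ?thesis .
  qed
  have C: "(13/10) \<le> hs_norm (mat 1 - X - X)"
  proof -
    have r1: "(936/1000) \<le> cmod (1 - 2*\<mu>1)" using one_minus_two[OF j1(1), of \<mu>1] j1(2) by linarith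
    have r2: "(936/1000) \<le> cmod (1 - 2*\<mu>2)" using one_minus_two[OF j2(1), of \<mu>2] j2(2) by linarith
    have p1: "(936/1000)^2 \<le> (cmod (1 - 2*\<mu>1))^2" using r1 by (rule power_mono) simp
    have p2: "(936/1000)^2 \<le> (cmod (1 - 2*\<mu>2))^2" using r2 by (rule power_mono) simp
    have e1: "((936/1000)::real)^2 = 876096/1000000" "((13/10)::real)^2 = 169/100" by (simp_all add: power2_eq_square)
    have "((13/10)::real)^2 \<le> (hs_norm (mat 1 - X - X))^2" unfolding n3 using p1 p2 s0 e1 by linarith
    then show ?thesis by (rule power2_le_imp_le) (simp add: hs_norm_eq)
  qed
  show "cmod (trace X - 1) \<le> (147/100)*\<delta> \<and> cmod (4 * nu X - 1) \<le> (301/100)*\<delta> \<and> (13/10) \<le> hs_norm (mat 1 - X - X)"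
    using A B C by simp
qed

definition mk :: "complex \<Rightarrow> complex \<Rightarrow> complex \<Rightarrow> complex \<Rightarrow> cmat2" where
  "mk a b c d = (\<chi> i j. if i = 1 then (if j = 1 then a else b) else (if j = 1 then c else d))"

lemma mk_ent [simp]: "mk a b c d $1$1 = a" "mk a b c d $1$2 = b" "mk a b c d $2$1 = c" "mk a b c d $2$2 = d"
  by (simp_all add: mk_def)

lemma lin_aux2:
  fixes x y :: real
  assumes "4548/10000 * x \<le> 2265025/1000000 * y" "0 \<le> y"
  shows "x \<le> 4981/1000 * y"
  using assms by argo

lemma lin_aux3:
  fixes x y z :: real
  assumes "z = x/2 + w" "x \<le> 21609/10000 * y" "w \<le> 4981/1000 * y" "0 \<le> y"
  shows "z \<le> 61009/10000 * y"
  using assms by argo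

lemma key_quad:
  fixes \<nu> r D q \<eta> :: complex and n :: complex
  assumes rr: "r^2 = n^2 + 4 * cnj \<nu> * \<eta>" and D: "D = n + r" and qD: "q * D = 2 * \<eta>" and D0: "D \<noteq> 0"
  shows "cnj \<nu> * q^2 + n * q - \<eta> = 0"
proof -
  have "D^2 * (cnj \<nu> * q^2 + n * q - \<eta>) = cnj \<nu> * (q*D)^2 + n*(q*D)*D - \<eta>*D^2"
    by (simp add: power2_eq_square algebra_simps)
  also have "\<dots> = cnj \<nu> * (2*\<eta>)^2 + n*(2*\<eta>)*D - \<eta>*D^2"
    by (simp only: qD)
  also have "\<dots> = cnj \<nu> * (2*\<eta>)^2 + n*(2*\<eta>)*(n + r) - \<eta>*(n^2 + 2*n*r + r^2)"
    unfolding D by (simp add: power2_eq_square algebra_simps)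
  also have "\<dots> = 0" unfolding rr by (simp add: power2_eq_square algebra_simps)
  finally show ?thesis using D0 by simp
qed

lemma L4:
  fixes X :: cmat2 and \<delta> :: real
  assumes d: "0 \<le> \<delta>" "\<delta> \<le> 3/100" and t1: "cmod (trace X - 1) \<le> (147/100)*\<delta>"
    and nu1: "cmod (4 * nu X - 1) \<le> (301/100)*\<delta>"
  shows "\<exists>Q. Q ** Q = Q \<and> crank Q = 1 \<and> hs_norm (X - Q) \<le> (247/100)*\<delta> \<and> 7/5 \<le> hs_norm (mat 1 - Q - Q)"
proof -
  define \<alpha> where "\<alpha> = al X"
  define b where "b = X$1$2"
  define c where "c = X$2$1"
  define \<nu> where "\<nu> = nu X"
  define n where "n = n2 X"
  define \<eta> where "\<eta> = 1/4 - \<nu>"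
  have n_eq: "complex_of_real n = 2 * (\<alpha> * cnj \<alpha>) + b * cnj b + c * cnj c"
    unfolding n_def n2_def \<alpha>_def b_def c_def by (simp add: complex_norm_square[symmetric])
  have eta: "cmod \<eta> \<le> (301/400)*\<delta>"
  proof -
    have "\<eta> = - (4 * nu X - 1) / 4" unfolding \<eta>_def \<nu>_def by simp
    then have "cmod \<eta> = cmod (- (4 * nu X - 1)) / 4" by (simp only: norm_divide) simp
    then have "cmod \<eta> = cmod (4 * nu X - 1) / 4" by (simp only: norm_minus_cancel)
    then show ?thesis using nu1 by simp
  qed
  have nuge: "cmod \<nu> \<ge> 1/4 - (301/400)*\<delta>"
  proof -
    have "\<nu> = 1/4 - \<eta>" unfolding \<eta>_def by simp
    then have "cmod (1/4::complex) - cmod \<eta> \<le> cmod \<nu>" using norm_triangle_ineq2[of "1/4::complex" \<eta>] by simp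
    then show ?thesis using eta by simp
  qed
  have nge: "4548/10000 \<le> n"
    using I4[of X] nuge d unfolding n_def \<nu>_def by linarith
  define \<Delta> where "\<Delta> = (complex_of_real n)^2 + 4 * cnj \<nu> * \<eta>"
  define r where "r = csqrt \<Delta>"
  define D where "D = complex_of_real n + r"
  have ReD: "n \<le> Re D" unfolding D_def r_def using Re_csqrt[of \<Delta>] by simp
  have cD: "n \<le> cmod D" using ReD abs_Re_le_cmod[of D] by linarith
  have D0: "D \<noteq> 0" using cD nge by auto
  define q where "q = 2 * \<eta> / D"
  have qD: "q * D = 2 * \<eta>" unfolding q_def using D0 by simp
  have rr: "r^2 = (complex_of_real n)^2 + 4 * cnj \<nu> * \<eta>" unfolding r_def \<Delta>_def by simp
  have kq: "cnj \<nu> * q^2 + complex_of_real n * q - \<eta> = 0"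
    by (rule key_quad[OF rr D_def qD D0])
  define \<alpha>' where "\<alpha>' = \<alpha> + q * cnj \<alpha>"
  define b' where "b' = b + q * cnj c"
  define c' where "c' = c + q * cnj b"
  have nuq: "\<alpha>'^2 + b' * c' = 1/4"
  proof -
    have "\<alpha>'^2 + b' * c' = (\<alpha>^2 + b*c) + q * (2 * (\<alpha> * cnj \<alpha>) + b * cnj b + c * cnj c) + q^2 * cnj (\<alpha>^2 + b*c)"
      unfolding \<alpha>'_def b'_def c'_def by (simp add: power2_eq_square algebra_simps)
    also have "\<dots> = \<nu> + q * complex_of_real n + q^2 * cnj \<nu>"
      unfolding n_eq \<nu>_def nu_def \<alpha>_def b_def c_def by simp
    also have "\<dots> = 1/4" using kq unfolding \<eta>_def by (simp add: algebra_simps)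
    finally show ?thesis .
  qed
  define Q where "Q = mk (1/2 + \<alpha>') b' c' (1/2 - \<alpha>')"
  have QQ: "Q ** Q = Q"
  proof -
    have e0: "(1/2 + \<alpha>')*(1/2 + \<alpha>') + b'*c' = 1/4 + \<alpha>' + (\<alpha>'^2 + b' * c')"
      "(1/2 - \<alpha>')*(1/2 - \<alpha>') + b'*c' = 1/4 - \<alpha>' + (\<alpha>'^2 + b' * c')"
      by (simp_all add: power2_eq_square algebra_simps)
    have e: "(1/2 + \<alpha>')*(1/2 + \<alpha>') + b'*c' = 1/2 + \<alpha>'" "(1/2 - \<alpha>')*(1/2 - \<alpha>') + b'*c' = 1/2 - \<alpha>'"
      unfolding e0 nuq by simp_all
    have "(Q ** Q)$i$j = Q$i$j" for i j
      using exhaust_2[of i] exhaust_2[of j] e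
      by (auto simp: mult_ent Q_def algebra_simps)
    then show ?thesis by (simp add: vec_eq_iff)
  qed
  have crk: "crank Q = 1"
  proof (rule crank_of_trace1)
    show "Q$1$1 + Q$2$2 = 1" by (simp add: Q_def)
    show "Q$1$1 * Q$2$2 = Q$1$2 * Q$2$1" using nuq by (simp add: Q_def power2_eq_square algebra_simps)
  qed
  have far: "7/5 \<le> hs_norm (mat 1 - Q - Q)"
  proof -
    have "trace Q = 1" by (simp add: Q_def trace_ent)
    moreover have nq: "nu Q = 1/4" using nuq by (simp add: Q_def nu_def al_def)
    moreover have "cmod (nu Q) = 1/4" by (simp only: nq) simp
    ultimately have "cmod (nu Q) = 1/4" "trace Q = 1" by simp_all
    then have "2 \<le> (hs_norm (mat 1 - Q - Q))^2" unfolding I3 using I4[of Q] by simp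
    moreover have "(7/5::real)^2 \<le> 2" by (simp add: power2_eq_square)
    ultimately have "(7/5::real)^2 \<le> (hs_norm (mat 1 - Q - Q))^2" by linarith
    then show ?thesis by (rule power2_le_imp_le) (simp add: hs_norm_eq)
  qed
  have close: "hs_norm (X - Q) \<le> (247/100)*\<delta>"
  proof -
    have tr: "trace (X - Q) = trace X - 1" by (simp add: Q_def trace_ent)
    have a1: "al (X - Q) = - (q * cnj \<alpha>)" by (simp add: al_def Q_def \<alpha>'_def \<alpha>_def field_simps)
    have a2: "(X - Q)$1$2 = - (q * cnj c)" by (simp add: Q_def b'_def b_def)
    have a3: "(X - Q)$2$1 = - (q * cnj b)" by (simp add: Q_def c'_def c_def)
    have n2e: "n2 (X - Q) = (cmod q)^2 * n"
      unfolding n2_def a1 a2 a3 n_def n2_def \<alpha>_def b_def c_def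
      by (simp add: norm_mult power_mult_distrib algebra_simps)
    have hs2: "(hs_norm (X - Q))^2 = (cmod (trace X - 1))^2/2 + (cmod q)^2 * n"
      using I1[of "X - Q"] unfolding tr n2e .
    have qn: "cmod q * n \<le> 2 * cmod \<eta>"
    proof -
      have "cmod q * cmod D = 2 * cmod \<eta>" using qD by (metis norm_mult norm_numeral)
      moreover have "cmod q * n \<le> cmod q * cmod D" using cD by (simp add: mult_left_mono)
      ultimately show ?thesis by linarith
    qed
    have "(cmod q * n)^2 \<le> (2 * cmod \<eta>)^2" using qn nge by (intro power_mono) auto
    also have "\<dots> \<le> (2 * ((301/400)*\<delta>))^2" using eta by (intro power_mono) auto
    also have "\<dots> = 2265025/1000000 * \<delta>^2" by (simp add: power2_eq_square)
    finally have s1: "(cmod q)^2 * n * n \<le> 2265025/1000000 * \<delta>^2" by (simp add: power2_eq_square algebra_simps)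
    have "(cmod q)^2 * n * (4548/10000) \<le> (cmod q)^2 * n * n"
      using nge by (intro mult_left_mono) auto
    then have s2: "(cmod q)^2 * n \<le> 4981/1000 * \<delta>^2"
      using s1 by (intro lin_aux2) (auto simp: algebra_simps)
    have s3: "(cmod (trace X - 1))^2 \<le> 21609/10000 * \<delta>^2"
    proof -
      have "(cmod (trace X - 1))^2 \<le> ((147/100)*\<delta>)^2" using t1 by (intro power_mono) auto
      also have "\<dots> = 21609/10000 * \<delta>^2" by (simp add: power2_eq_square)
      finally show ?thesis .
    qed
    have "(hs_norm (X - Q))^2 \<le> 61009/10000 * \<delta>^2"
      by (rule lin_aux3[OF hs2 s3 s2]) simp
    also have "\<dots> = ((247/100)*\<delta>)^2" by (simp add: power2_eq_square)
    finally show ?thesis by (rule power2_le_imp_le) (use d in simp)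
  qed
  show ?thesis using QQ crk close far by blast
qed

lemma hs_tri: "hs_norm (X + Y) \<le> hs_norm X + hs_norm Y"
  by (simp add: hs_norm_eq norm_triangle_ineq)
lemma hs_neg: "hs_norm (- X) = hs_norm X"
  by (simp add: hs_norm_eq)
lemma hs_comm: "hs_norm (X - Y) = hs_norm (Y - X)"
  by (simp add: hs_norm_eq norm_minus_commute)
lemma hs_sum3: "hs_norm (A + B + C) \<le> hs_norm A + hs_norm B + hs_norm C"
  using hs_tri[of "A + B" C] hs_tri[of A B] by linarith
lemma hs_sum4: "hs_norm (A + B + C + D) \<le> hs_norm A + hs_norm B + hs_norm C + hs_norm D"
  using hs_tri[of "A + B + C" D] hs_sum3[of A B C] by linarith
lemma hs_sum5: "hs_norm (A + B + C + D + E) \<le> hs_norm A + hs_norm B + hs_norm C + hs_norm D + hs_norm E"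
  using hs_tri[of "A + B + C + D" E] hs_sum4[of A B C D] by linarith

lemma Dsq_id: "((X::cmat2) - Y)**(X - Y) - (X - Y) = (X**X - X) + - (X**Y - Y) + - (Y**X - Y) + (Y**Y - Y)"
  by (simp add: vec_eq_iff forall_2 mult_ent algebra_simps)

lemma Bsq_id: "(mat 1 - (X::cmat2) - Y)**(mat 1 - X - Y) - (mat 1 - X - Y)
   = (X**X - X) + (Y**Y - Y) + (X**Y - G) + (Y**X - G) + (G + G)"
  by (simp add: vec_eq_iff forall_2 mult_ent mat1_ent algebra_simps)

lemma trace_diff: "trace ((X::cmat2) - Y) = trace X - trace Y"
  by (simp add: trace_ent)

lemma int_close: "cmod (of_int z :: complex) < 1 \<Longrightarrow> z = 0"
proof -
  assume "cmod (of_int z :: complex) < 1"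
  then have "\<bar>of_int z :: real\<bar> < 1" by (metis norm_of_int)
  then show "z = 0" by linarith
qed

locale SL =
  fixes mul :: "'a \<Rightarrow> 'a \<Rightarrow> 'a" and \<theta> :: "'a \<Rightarrow> cmat2" and \<delta> :: real
  assumes semilat: "semilattice mul" and d0: "0 \<le> \<delta>" and d1: "\<delta> \<le> 3/100"
    and approx: "\<And>e f. hs_norm (\<theta> e ** \<theta> f - \<theta> (mul e f)) \<le> \<delta>"
begin

lemma idem: "mul x x = x"
proof - interpret semilattice mul by (rule semilat) show ?thesis by simp qed
lemma comm: "mul x y = mul y x"
proof - interpret semilattice mul by (rule semilat) show ?thesis by (rule commute) qed
lemma assoc: "mul (mul x y) z = mul x (mul y z)"
proof - interpret semilattice mul by (rule semilat) show ?thesis by (rule assoc) qed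
lemma lcomm: "mul x (mul y z) = mul y (mul x z)"
  by (metis assoc comm)

lemma sq: "hs_norm (\<theta> x ** \<theta> x - \<theta> x) \<le> \<delta>"
  using approx[of x x] idem by simp

lemma inS: assumes "x \<in> Sk \<theta> k" shows "cmod (trace (\<theta> x) - of_nat k) \<le> 147/100*\<delta>"
proof -
  obtain j where j: "j \<in> {0,1,2::nat}" "cmod (trace (\<theta> x) - of_nat j) \<le> 147/100*\<delta>"
    using S_lem(1)[OF sq d0 d1] by blast
  have k: "cmod (trace (\<theta> x) - of_nat k) < 95/100" using assms unfolding Sk_def by simp
  have e: "(of_int (int j - int k) :: complex) = (trace (\<theta> x) - of_nat k) - (trace (\<theta> x) - of_nat j)"
    by simp
  have "cmod (of_int (int j - int k) :: complex) \<le> cmod (trace (\<theta> x) - of_nat k) + cmod (trace (\<theta> x) - of_nat j)"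
    unfolding e by (rule norm_triangle_ineq4)
  then have "cmod (of_int (int j - int k) :: complex) < 1" using j(2) k d1 by linarith
  then have "int j - int k = 0" by (rule int_close)
  then have "j = k" by simp
  then show ?thesis using j by simp
qed

lemma cover: "\<exists>k\<in>{0,1,2::nat}. x \<in> Sk \<theta> k"
proof -
  obtain j where j: "j \<in> {0,1,2::nat}" "cmod (trace (\<theta> x) - of_nat j) \<le> 147/100*\<delta>"
    using S_lem(1)[OF sq d0 d1] by blast
  then have "x \<in> Sk \<theta> j" using d1 by (simp add: Sk_def)
  then show ?thesis using j(1) by blast
qed

lemma uniq: assumes "x \<in> Sk \<theta> k" "x \<in> Sk \<theta> k'" shows "k = k'"
proof -
  have e: "(of_int (int k' - int k) :: complex) = (trace (\<theta> x) - of_nat k) - (trace (\<theta> x) - of_nat k')"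
    by simp
  have "cmod (of_int (int k' - int k) :: complex) \<le> cmod (trace (\<theta> x) - of_nat k) + cmod (trace (\<theta> x) - of_nat k')"
    unfolding e by (rule norm_triangle_ineq4)
  then have "cmod (of_int (int k' - int k) :: complex) < 1" using inS[OF assms(1)] inS[OF assms(2)] d1 by linarith
  then have "int k' - int k = 0" by (rule int_close)
  then show ?thesis by simp
qed

lemma S1far: "x \<in> Sk \<theta> 1 \<Longrightarrow> 13/10 \<le> hs_norm (mat 1 - \<theta> x - \<theta> x)"
  using S_lem(2)[OF sq d0 d1] by (simp add: Sk_def)

lemma S1near: "x \<in> Sk \<theta> 1 \<Longrightarrow> cmod (trace (\<theta> x) - 1) \<le> (147/100)*\<delta> \<and> cmod (4 * nu (\<theta> x) - 1) \<le> (301/100)*\<delta>"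
  using S_lem(2)[OF sq d0 d1] by (simp add: Sk_def)

lemma normS0: assumes "x \<in> Sk \<theta> 0" shows "hs_norm (\<theta> x) \<le> 105/100*\<delta>"
proof -
  have tr: "cmod (trace (\<theta> x)) \<le> 441/10000" using inS[OF assms] d1 by simp
  have "hs_norm (\<theta> x) \<le> \<delta> / (955/1000)"
    by (rule zero_lem[OF sq[of x], of "3/100" "6/100" "32/1000" "32/1000" "441/10000"]) (use d1 tr in auto)
  also have "\<dots> \<le> 105/100*\<delta>" using d0 by simp
  finally show ?thesis .
qed

lemma Dsq: assumes "mul x y = y"
  shows "hs_norm ((\<theta> x - \<theta> y)**(\<theta> x - \<theta> y) - (\<theta> x - \<theta> y)) \<le> 4*\<delta>"
proof -
  have a: "hs_norm (\<theta> x ** \<theta> y - \<theta> y) \<le> \<delta>" using approx[of x y] assms by simp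
  have b: "hs_norm (\<theta> y ** \<theta> x - \<theta> y) \<le> \<delta>" using approx[of y x] assms comm by simp
  show ?thesis unfolding Dsq_id
    using hs_sum4[of "\<theta> x ** \<theta> x - \<theta> x" "- (\<theta> x ** \<theta> y - \<theta> y)" "- (\<theta> y ** \<theta> x - \<theta> y)" "\<theta> y ** \<theta> y - \<theta> y"]
      a b sq[of x] sq[of y] unfolding hs_neg by linarith
qed

lemma mono: assumes "mul x y = y" "x \<in> Sk \<theta> kx" "y \<in> Sk \<theta> ky" shows "ky \<le> kx"
proof -
  have ex: "\<exists>j\<in>{0,1,2::nat}. cmod (trace (\<theta> x - \<theta> y) - of_nat j) \<le> 2*(143/1000)"
    by (rule trace_lem[OF Dsq[OF assms(1)], of "12/100" "24/100" "158/1000" "143/1000"]) (use d1 in auto)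
  obtain j where j: "j \<in> {0,1,2::nat}" "cmod (trace (\<theta> x - \<theta> y) - of_nat j) \<le> 2*(143/1000)"
    using ex by blast
  have e: "(of_int (int kx - int ky - int j) :: complex)
     = ((trace (\<theta> x - \<theta> y) - of_nat j) - (trace (\<theta> x) - of_nat kx)) + (trace (\<theta> y) - of_nat ky)"
    by (simp add: trace_diff)
  have "cmod (of_int (int kx - int ky - int j) :: complex) \<le>
     cmod (trace (\<theta> x - \<theta> y) - of_nat j) + cmod (trace (\<theta> x) - of_nat kx) + cmod (trace (\<theta> y) - of_nat ky)"
    unfolding e using norm_triangle_ineq[of "(trace (\<theta> x - \<theta> y) - of_nat j) - (trace (\<theta> x) - of_nat kx)" "trace (\<theta> y) - of_nat ky"]
      norm_triangle_ineq4[of "trace (\<theta> x - \<theta> y) - of_nat j" "trace (\<theta> x) - of_nat kx"] by linarith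
  then have "cmod (of_int (int kx - int ky - int j) :: complex) < 1"
    using j(2) inS[OF assms(2)] inS[OF assms(3)] d1 by linarith
  then have "int kx - int ky - int j = 0" by (rule int_close)
  then show ?thesis by linarith
qed

lemma same: assumes "mul x y = y" "x \<in> Sk \<theta> k" "y \<in> Sk \<theta> k"
  shows "hs_norm (\<theta> x - \<theta> y) \<le> 467/100*\<delta>"
proof -
  have "cmod (trace (\<theta> x - \<theta> y)) = cmod ((trace (\<theta> x) - of_nat k) - (trace (\<theta> y) - of_nat k))"
    by (simp add: trace_diff)
  also have "\<dots> \<le> cmod (trace (\<theta> x) - of_nat k) + cmod (trace (\<theta> y) - of_nat k)" by (rule norm_triangle_ineq4)
  finally have tr: "cmod (trace (\<theta> x - \<theta> y)) \<le> 882/10000" using inS[OF assms(2)] inS[OF assms(3)] d1 by linarith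
  have "hs_norm (\<theta> x - \<theta> y) \<le> (4*\<delta>) / (857/1000)"
    by (rule zero_lem[OF Dsq[OF assms(1)], of "12/100" "24/100" "158/1000" "143/1000" "882/10000"]) (use d1 tr in auto)
  also have "\<dots> \<le> 467/100*\<delta>" using d0 by simp
  finally show ?thesis .
qed

lemma cross: assumes "e \<in> Sk \<theta> 1" "f \<in> Sk \<theta> 1" "mul e f \<in> Sk \<theta> 0"
  shows "hs_norm (\<theta> f - (mat 1 - \<theta> e)) \<le> 823/100*\<delta>"
proof -
  let ?G = "\<theta> (mul e f)"
  have g: "hs_norm ?G \<le> 105/100*\<delta>" by (rule normS0[OF assms(3)])
  have a: "hs_norm (\<theta> e ** \<theta> f - ?G) \<le> \<delta>" by (rule approx)
  have b: "hs_norm (\<theta> f ** \<theta> e - ?G) \<le> \<delta>" using approx[of f e] comm by simp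
  have gg: "hs_norm (?G + ?G) \<le> 2*(105/100*\<delta>)" using hs_tri[of ?G ?G] g by linarith
  let ?Y = "mat 1 - \<theta> e - \<theta> f"
  have ysq: "hs_norm (?Y ** ?Y - ?Y) \<le> 61/10*\<delta>"
    unfolding Bsq_id[of "\<theta> e" "\<theta> f" ?G]
    using hs_sum5[of "\<theta> e ** \<theta> e - \<theta> e" "\<theta> f ** \<theta> f - \<theta> f" "\<theta> e ** \<theta> f - ?G" "\<theta> f ** \<theta> e - ?G" "?G + ?G"]
      sq[of e] sq[of f] a b gg by linarith
  have "trace ?Y = - ((trace (\<theta> e) - 1) + (trace (\<theta> f) - 1))" by (simp add: trace_ent mat1_ent)
  then have "cmod (trace ?Y) = cmod ((trace (\<theta> e) - 1) + (trace (\<theta> f) - 1))" by (simp only: norm_minus_cancel)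
  then have "cmod (trace ?Y) \<le> cmod (trace (\<theta> e) - 1) + cmod (trace (\<theta> f) - 1)"
    using norm_triangle_ineq[of "trace (\<theta> e) - 1" "trace (\<theta> f) - 1"] by linarith
  then have tr: "cmod (trace ?Y) \<le> 882/10000" using inS[OF assms(1)] inS[OF assms(2)] d1 by simp
  have "hs_norm ?Y \<le> (61/10*\<delta>) / (742/1000)"
    by (rule zero_lem[OF ysq, of "183/1000" "366/1000" "289/1000" "258/1000" "882/10000"]) (use d1 tr in auto)
  also have "\<dots> \<le> 823/100*\<delta>" using d0 by simp
  finally have fin: "hs_norm ?Y \<le> 823/100*\<delta>" .
  have eq: "\<theta> f - (mat 1 - \<theta> e) = - ?Y" by (simp add: algebra_simps)
  show ?thesis unfolding eq hs_neg by (rule fin)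
qed

end

context SL begin

lemma absorb: "mul x (mul x y) = mul x y" by (metis assoc idem)
lemma absorb2: "mul y (mul x y) = mul x y" by (metis absorb comm)

lemma g01: assumes "x \<in> Sk \<theta> 1" shows "mul x y \<in> Sk \<theta> 0 \<or> mul x y \<in> Sk \<theta> 1"
proof -
  obtain k where k: "k \<in> {0,1,2}" "mul x y \<in> Sk \<theta> k" using cover by blast
  have "k \<le> 1" by (rule mono[OF absorb assms k(2)])
  then show ?thesis using k by auto
qed

lemma main:
  assumes nonempty: "Sk \<theta> 1 \<noteq> {}"
  shows "\<exists>P :: complex^2^2. P ** P = P \<and> crank P = 1
     \<and> hs_cball P (12 * \<delta>) \<inter> hs_cball (mat 1 - P) (12 * \<delta>) = {}
     \<and> \<theta> ` Sk \<theta> 1 \<subseteq> hs_cball P (12 * \<delta>) \<union> hs_cball (mat 1 - P) (12 * \<delta>)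
     \<and> (\<forall>e\<in>Sk \<theta> 1. \<forall>f\<in>Sk \<theta> 1.
          (\<theta> e \<in> hs_cball P (12 * \<delta>) \<and> \<theta> f \<in> hs_cball P (12 * \<delta>)
             \<longrightarrow> \<theta> (mul e f) \<in> hs_cball P (12 * \<delta>))
        \<and> (\<theta> e \<in> hs_cball (mat 1 - P) (12 * \<delta>) \<and> \<theta> f \<in> hs_cball (mat 1 - P) (12 * \<delta>)
             \<longrightarrow> \<theta> (mul e f) \<in> hs_cball (mat 1 - P) (12 * \<delta>))
        \<and> (\<theta> e \<in> hs_cball P (12 * \<delta>) \<and> \<theta> f \<in> hs_cball (mat 1 - P) (12 * \<delta>)
             \<longrightarrow> mul e f \<in> Sk \<theta> 0))"
proof -
  obtain e0 where e0: "e0 \<in> Sk \<theta> 1" using nonempty by blast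
  obtain P where P: "P ** P = P" "crank P = 1" "hs_norm (\<theta> e0 - P) \<le> 247/100*\<delta>"
      "7/5 \<le> hs_norm (mat 1 - P - P)"
    using L4[OF d0 d1] S1near[OF e0] by blast
  define r where "r = 12 * \<delta>"
  have ballP: "B \<in> hs_cball P r \<longleftrightarrow> hs_norm (P - B) \<le> r" for B by (simp add: hs_cball_def)
  have ballQ: "B \<in> hs_cball (mat 1 - P) r \<longleftrightarrow> hs_norm (mat 1 - P - B) \<le> r" for B by (simp add: hs_cball_def)
  have disj: "hs_cball P r \<inter> hs_cball (mat 1 - P) r = {}"
  proof (rule ccontr)
    assume "hs_cball P r \<inter> hs_cball (mat 1 - P) r \<noteq> {}"
    then obtain B where B: "hs_norm (P - B) \<le> r" "hs_norm (mat 1 - P - B) \<le> r"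
      using ballP ballQ by blast
    have "mat 1 - P - P = (mat 1 - P - B) + - (P - B)" by (simp add: algebra_simps)
    then have "hs_norm (mat 1 - P - P) \<le> hs_norm (mat 1 - P - B) + hs_norm (P - B)"
      using hs_tri[of "mat 1 - P - B" "- (P - B)"] by (simp only: hs_neg)
    then show False using B P(4) d1 unfolding r_def by linarith
  qed
  have near: "hs_norm (\<theta> e0 - \<theta> x) \<le> 934/100*\<delta>" if x: "x \<in> Sk \<theta> 1" "mul e0 x \<in> Sk \<theta> 1" for x
  proof -
    have a: "hs_norm (\<theta> e0 - \<theta> (mul e0 x)) \<le> 467/100*\<delta>" by (rule same[OF absorb e0 x(2)])
    have b: "hs_norm (\<theta> x - \<theta> (mul e0 x)) \<le> 467/100*\<delta>" by (rule same[OF absorb2 x(1) x(2)])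
    have "\<theta> e0 - \<theta> x = (\<theta> e0 - \<theta> (mul e0 x)) + - (\<theta> x - \<theta> (mul e0 x))" by (simp add: algebra_simps)
    then have "hs_norm (\<theta> e0 - \<theta> x) \<le> hs_norm (\<theta> e0 - \<theta> (mul e0 x)) + hs_norm (\<theta> x - \<theta> (mul e0 x))"
      using hs_tri[of "\<theta> e0 - \<theta> (mul e0 x)" "- (\<theta> x - \<theta> (mul e0 x))"] by (simp only: hs_neg)
    then show ?thesis using a b by linarith
  qed
  have K2: "hs_norm (P - \<theta> x) \<le> r" if x: "x \<in> Sk \<theta> 1" "mul e0 x \<in> Sk \<theta> 1" for x
  proof -
    have "P - \<theta> x = - (\<theta> e0 - P) + (\<theta> e0 - \<theta> x)" by (simp add: algebra_simps)
    then have "hs_norm (P - \<theta> x) \<le> hs_norm (\<theta> e0 - P) + hs_norm (\<theta> e0 - \<theta> x)"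
      using hs_tri[of "- (\<theta> e0 - P)" "\<theta> e0 - \<theta> x"] by (simp only: hs_neg)
    then show ?thesis using near[OF x] P(3) d0 unfolding r_def by linarith
  qed
  have K3: "hs_norm (mat 1 - P - \<theta> x) \<le> r" if x: "x \<in> Sk \<theta> 1" "mul e0 x \<in> Sk \<theta> 0" for x
  proof -
    have c: "hs_norm (\<theta> x - (mat 1 - \<theta> e0)) \<le> 823/100*\<delta>" by (rule cross[OF e0 x])
    have "mat 1 - P - \<theta> x = (\<theta> e0 - P) + - (\<theta> x - (mat 1 - \<theta> e0))" by (simp add: algebra_simps)
    then have "hs_norm (mat 1 - P - \<theta> x) \<le> hs_norm (\<theta> e0 - P) + hs_norm (\<theta> x - (mat 1 - \<theta> e0))"
      using hs_tri[of "\<theta> e0 - P" "- (\<theta> x - (mat 1 - \<theta> e0))"] by (simp only: hs_neg)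
    then show ?thesis using c P(3) d0 unfolding r_def by linarith
  qed
  have inP: "mul e0 x \<in> Sk \<theta> 1" if x: "x \<in> Sk \<theta> 1" "hs_norm (P - \<theta> x) \<le> r" for x
  proof (rule ccontr)
    assume "mul e0 x \<notin> Sk \<theta> 1"
    then have "mul e0 x \<in> Sk \<theta> 0" using g01[OF e0] by blast
    then have "\<theta> x \<in> hs_cball (mat 1 - P) r" using K3 x ballQ by blast
    moreover have "\<theta> x \<in> hs_cball P r" using x ballP by blast
    ultimately show False using disj by blast
  qed
  have inQ: "mul e0 x \<in> Sk \<theta> 0" if x: "x \<in> Sk \<theta> 1" "hs_norm (mat 1 - P - \<theta> x) \<le> r" for x
  proof (rule ccontr)
    assume "mul e0 x \<notin> Sk \<theta> 0"
    then have "mul e0 x \<in> Sk \<theta> 1" using g01[OF e0] by blast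
    then have "\<theta> x \<in> hs_cball P r" using K2 x ballP by blast
    moreover have "\<theta> x \<in> hs_cball (mat 1 - P) r" using x ballQ by blast
    ultimately show False using disj by blast
  qed
  have covr: "\<theta> ` Sk \<theta> 1 \<subseteq> hs_cball P r \<union> hs_cball (mat 1 - P) r"
  proof
    fix B assume "B \<in> \<theta> ` Sk \<theta> 1"
    then obtain x where x: "x \<in> Sk \<theta> 1" "B = \<theta> x" by blast
    show "B \<in> hs_cball P r \<union> hs_cball (mat 1 - P) r"
      using g01[OF e0, of x] K2[OF x(1)] K3[OF x(1)] ballP ballQ x(2) by blast
  qed
  have cl1: "\<theta> (mul e f) \<in> hs_cball P r"
    if ef: "e \<in> Sk \<theta> 1" "f \<in> Sk \<theta> 1" "hs_norm (P - \<theta> e) \<le> r" "hs_norm (P - \<theta> f) \<le> r" for e f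
  proof -
    have x: "mul e0 e \<in> Sk \<theta> 1" by (rule inP[OF ef(1,3)])
    have y: "mul e0 f \<in> Sk \<theta> 1" by (rule inP[OF ef(2,4)])
    have "mul (mul e0 e) (mul e0 f) = mul e0 (mul e (mul e0 f))" by (rule assoc)
    also have "\<dots> = mul e0 (mul e0 (mul e f))" by (simp only: lcomm[of e e0 f])
    also have "\<dots> = mul e0 (mul e f)" by (rule absorb)
    finally have zeq: "mul (mul e0 e) (mul e0 f) = mul e0 (mul e f)" .
    have z1: "mul e0 (mul e f) \<in> Sk \<theta> 1"
    proof (rule ccontr)
      assume "mul e0 (mul e f) \<notin> Sk \<theta> 1"
      then have z0: "mul (mul e0 e) (mul e0 f) \<in> Sk \<theta> 0" using g01[OF x, of "mul e0 f"] zeq by simp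
      have c: "hs_norm (\<theta> (mul e0 f) - (mat 1 - \<theta> (mul e0 e))) \<le> 823/100*\<delta>" by (rule cross[OF x y z0])
      have a: "hs_norm (\<theta> e0 - \<theta> (mul e0 e)) \<le> 467/100*\<delta>" by (rule same[OF absorb e0 x])
      have b: "hs_norm (\<theta> e0 - \<theta> (mul e0 f)) \<le> 467/100*\<delta>" by (rule same[OF absorb e0 y])
      have "mat 1 - \<theta> e0 - \<theta> e0 = - (\<theta> (mul e0 f) - (mat 1 - \<theta> (mul e0 e))) + - (\<theta> e0 - \<theta> (mul e0 e))
          + - (\<theta> e0 - \<theta> (mul e0 f))" by (simp add: algebra_simps)
      then have "hs_norm (mat 1 - \<theta> e0 - \<theta> e0) \<le> hs_norm (\<theta> (mul e0 f) - (mat 1 - \<theta> (mul e0 e)))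
          + hs_norm (\<theta> e0 - \<theta> (mul e0 e)) + hs_norm (\<theta> e0 - \<theta> (mul e0 f))"
        using hs_sum3[of "- (\<theta> (mul e0 f) - (mat 1 - \<theta> (mul e0 e)))" "- (\<theta> e0 - \<theta> (mul e0 e))"
            "- (\<theta> e0 - \<theta> (mul e0 f))"] by (simp only: hs_neg)
      then show False using a b c S1far[OF e0] d1 by linarith
    qed
    obtain k where k: "k \<in> {0,1,2}" "mul e f \<in> Sk \<theta> k" using cover by blast
    have "k \<le> 1" by (rule mono[OF absorb ef(1) k(2)])
    moreover have "1 \<le> k" by (rule mono[OF absorb2 k(2) z1])
    ultimately have "mul e f \<in> Sk \<theta> 1" using k by auto
    then show ?thesis using K2 z1 ballP by blast
  qed
  have cl2: "\<theta> (mul e f) \<in> hs_cball (mat 1 - P) r"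
    if ef: "e \<in> Sk \<theta> 1" "f \<in> Sk \<theta> 1" "hs_norm (mat 1 - P - \<theta> e) \<le> r" "hs_norm (mat 1 - P - \<theta> f) \<le> r" for e f
  proof -
    have x: "mul e0 e \<in> Sk \<theta> 0" by (rule inQ[OF ef(1,3)])
    have y: "mul e0 f \<in> Sk \<theta> 0" by (rule inQ[OF ef(2,4)])
    have z0: "mul e0 (mul e f) \<in> Sk \<theta> 0"
    proof -
      obtain k where k: "k \<in> {0,1,2}" "mul e0 (mul e f) \<in> Sk \<theta> k" using cover by blast
      have "mul (mul e0 e) (mul e0 (mul e f)) = mul e0 (mul e (mul e0 (mul e f)))" by (rule assoc)
      also have "\<dots> = mul e0 (mul e0 (mul e (mul e f)))" by (simp only: lcomm[of e e0 "mul e f"])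
      also have "\<dots> = mul e0 (mul e f)" by (simp only: absorb)
      finally have "k \<le> 0" by (rule mono[OF _ x k(2)])
      then show ?thesis using k by simp
    qed
    have ef1: "mul e f \<in> Sk \<theta> 1"
    proof (rule ccontr)
      assume "mul e f \<notin> Sk \<theta> 1"
      then have ef0: "mul e f \<in> Sk \<theta> 0" using g01[OF ef(1), of f] by blast
      have c1: "hs_norm (\<theta> f - (mat 1 - \<theta> e)) \<le> 823/100*\<delta>" by (rule cross[OF ef(1,2) ef0])
      have c2: "hs_norm (\<theta> e - (mat 1 - \<theta> e0)) \<le> 823/100*\<delta>" by (rule cross[OF e0 ef(1) x])
      have c3: "hs_norm (\<theta> f - (mat 1 - \<theta> e0)) \<le> 823/100*\<delta>" by (rule cross[OF e0 ef(2) y])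
      have "mat 1 - \<theta> e - \<theta> e = - (\<theta> f - (mat 1 - \<theta> e)) + (\<theta> f - (mat 1 - \<theta> e0))
          + - (\<theta> e - (mat 1 - \<theta> e0))" by (simp add: algebra_simps)
      then have "hs_norm (mat 1 - \<theta> e - \<theta> e) \<le> hs_norm (\<theta> f - (mat 1 - \<theta> e))
          + hs_norm (\<theta> f - (mat 1 - \<theta> e0)) + hs_norm (\<theta> e - (mat 1 - \<theta> e0))"
        using hs_sum3[of "- (\<theta> f - (mat 1 - \<theta> e))" "\<theta> f - (mat 1 - \<theta> e0)"
            "- (\<theta> e - (mat 1 - \<theta> e0))"] by (simp only: hs_neg)
      then show False using c1 c2 c3 S1far[OF ef(1)] d1 by linarith
    qed
    show ?thesis using K3[OF ef1 z0] ballQ by blast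
  qed
  have cl3: "mul e f \<in> Sk \<theta> 0"
    if ef: "e \<in> Sk \<theta> 1" "f \<in> Sk \<theta> 1" "hs_norm (P - \<theta> e) \<le> r" "hs_norm (mat 1 - P - \<theta> f) \<le> r" for e f
  proof (rule ccontr)
    assume "mul e f \<notin> Sk \<theta> 0"
    then have ef1: "mul e f \<in> Sk \<theta> 1" using g01[OF ef(1), of f] by blast
    have x: "mul e0 e \<in> Sk \<theta> 1" by (rule inP[OF ef(1,3)])
    have y: "mul e0 f \<in> Sk \<theta> 0" by (rule inQ[OF ef(2,4)])
    have a: "hs_norm (\<theta> e - \<theta> (mul e f)) \<le> 467/100*\<delta>" by (rule same[OF absorb ef(1) ef1])
    have b: "hs_norm (\<theta> f - \<theta> (mul e f)) \<le> 467/100*\<delta>" by (rule same[OF absorb2 ef(2) ef1])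
    have n: "hs_norm (\<theta> e0 - \<theta> e) \<le> 934/100*\<delta>" by (rule near[OF ef(1) x])
    have c: "hs_norm (\<theta> f - (mat 1 - \<theta> e0)) \<le> 823/100*\<delta>" by (rule cross[OF e0 ef(2) y])
    have "mat 1 - \<theta> e0 - \<theta> e0 = - (\<theta> f - (mat 1 - \<theta> e0)) + (\<theta> f - \<theta> (mul e f))
        + - (\<theta> e - \<theta> (mul e f)) + - (\<theta> e0 - \<theta> e)" by (simp add: algebra_simps)
    then have "hs_norm (mat 1 - \<theta> e0 - \<theta> e0) \<le> hs_norm (\<theta> f - (mat 1 - \<theta> e0))
        + hs_norm (\<theta> f - \<theta> (mul e f)) + hs_norm (\<theta> e - \<theta> (mul e f)) + hs_norm (\<theta> e0 - \<theta> e)"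
      using hs_sum4[of "- (\<theta> f - (mat 1 - \<theta> e0))" "\<theta> f - \<theta> (mul e f)"
          "- (\<theta> e - \<theta> (mul e f))" "- (\<theta> e0 - \<theta> e)"] by (simp only: hs_neg)
    then show False using a b c n S1far[OF e0] d1 by linarith
  qed
  have bP: "B \<in> hs_cball P (12 * \<delta>) \<longleftrightarrow> hs_norm (P - B) \<le> r" for B
    by (simp add: hs_cball_def r_def)
  have bQ: "B \<in> hs_cball (mat 1 - P) (12 * \<delta>) \<longleftrightarrow> hs_norm (mat 1 - P - B) \<le> r" for B
    by (simp add: hs_cball_def r_def)
  show ?thesis
  proof (intro exI[of _ P] conjI ballI impI)
    show "P ** P = P" by (rule P(1))
    show "crank P = 1" by (rule P(2))
    show "hs_cball P (12 * \<delta>) \<inter> hs_cball (mat 1 - P) (12 * \<delta>) = {}" using disj unfolding r_def .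
    show "\<theta> ` Sk \<theta> 1 \<subseteq> hs_cball P (12 * \<delta>) \<union> hs_cball (mat 1 - P) (12 * \<delta>)" using covr unfolding r_def .
  next
    fix e f assume e: "e \<in> Sk \<theta> 1" and f: "f \<in> Sk \<theta> 1"
    {
      assume h: "\<theta> e \<in> hs_cball P (12 * \<delta>) \<and> \<theta> f \<in> hs_cball P (12 * \<delta>)"
      have "\<theta> (mul e f) \<in> hs_cball P r" using cl1[OF e f] h unfolding bP by blast
      then show "\<theta> (mul e f) \<in> hs_cball P (12 * \<delta>)" unfolding r_def .
    }
    {
      assume h: "\<theta> e \<in> hs_cball (mat 1 - P) (12 * \<delta>) \<and> \<theta> f \<in> hs_cball (mat 1 - P) (12 * \<delta>)"
      have "\<theta> (mul e f) \<in> hs_cball (mat 1 - P) r" using cl2[OF e f] h unfolding bQ by blast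
      then show "\<theta> (mul e f) \<in> hs_cball (mat 1 - P) (12 * \<delta>)" unfolding r_def .
    }
    {
      assume h: "\<theta> e \<in> hs_cball P (12 * \<delta>) \<and> \<theta> f \<in> hs_cball (mat 1 - P) (12 * \<delta>)"
      show "mul e f \<in> Sk \<theta> 0" using cl3[OF e f] h unfolding bP bQ by blast
    }
  qed
qed

end

theorem propositionp:
  fixes mul :: "'a \<Rightarrow> 'a \<Rightarrow> 'a"
    and \<theta> :: "'a \<Rightarrow> complex^2^2"
    and \<delta> :: real
  assumes semilat: "semilattice mul"
    and delta: "0 \<le> \<delta>" "\<delta> < 0.03"
    and approx: "\<And>e f. hs_norm (\<theta> e ** \<theta> f - \<theta> (mul e f)) \<le> \<delta>"
    and nonempty: "Sk \<theta> 1 \<noteq> {}"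
  shows "\<exists>P :: complex^2^2. P ** P = P \<and> crank P = 1
     \<and> hs_cball P (12 * \<delta>) \<inter> hs_cball (mat 1 - P) (12 * \<delta>) = {}
     \<and> \<theta> ` Sk \<theta> 1 \<subseteq> hs_cball P (12 * \<delta>) \<union> hs_cball (mat 1 - P) (12 * \<delta>)
     \<and> (\<forall>e\<in>Sk \<theta> 1. \<forall>f\<in>Sk \<theta> 1.
          (\<theta> e \<in> hs_cball P (12 * \<delta>) \<and> \<theta> f \<in> hs_cball P (12 * \<delta>)
             \<longrightarrow> \<theta> (mul e f) \<in> hs_cball P (12 * \<delta>))
        \<and> (\<theta> e \<in> hs_cball (mat 1 - P) (12 * \<delta>) \<and> \<theta> f \<in> hs_cball (mat 1 - P) (12 * \<delta>)
             \<longrightarrow> \<theta> (mul e f) \<in> hs_cball (mat 1 - P) (12 * \<delta>))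
        \<and> (\<theta> e \<in> hs_cball P (12 * \<delta>) \<and> \<theta> f \<in> hs_cball (mat 1 - P) (12 * \<delta>)
             \<longrightarrow> mul e f \<in> Sk \<theta> 0))"
proof -
  have d1: "\<delta> \<le> 3/100" using delta(2) by simp
  interpret SL mul \<theta> \<delta>
    by (rule SL.intro[OF semilat delta(1) d1 approx])
  show ?thesis by (rule main[OF nonempty])
qed

end
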